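(* Let $R$ be a ring with unity and involution $*$, and let $a\in R$ be left dual pseudo core invertible with left dual pseudo core index $I(a)=k$. Then there exist $a_1,a_2\in R$ with $a^k=a_1+a_2$ such that (1) $a_1$ is left dual core invertible, (2) $a_2^2=0$, (3) $a_2^*a_1=0=a_1a_2$. In addition, for any left dual pseudo core inverse $y$ of $a$, the element $ya^{k+1}$ is left dual core invertible and $y^k$ is a left dual core inverse of it.
   Context: $a$ is left dual pseudo core invertible if there exist $y\in R$ and a positive integer $k$ such that $a^kya=a^k$, $(ya)^*=ya$ and $y^2a=y$; such $y$ is a left dual pseudo core inverse of $a$, and the smallest such $k$ is the left dual pseudo core index $I(a)$. An element $u$ is left dual core invertible if there exists $z$ with $uzu=u$, $(zu)^*=zu$ and $z^2u=z$; such $z$ is a left dual core inverse of $u$. *)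

theory Defs
  imports Main
begin

class ring_1_invol = ring_1 +
  fixes invol :: "'a \<Rightarrow> 'a"
  assumes invol_add: "invol (x + y) = invol x + invol y"
      and invol_mult: "invol (x * y) = invol y * invol x"
      and invol_invol: "invol (invol x) = x"

definition ldpc_inverse_k :: "nat \<Rightarrow> 'a::ring_1_invol \<Rightarrow> 'a \<Rightarrow> bool" where
  "ldpc_inverse_k k a y \<longleftrightarrow>
     0 < k \<and> a ^ k * y * a = a ^ k \<and> invol (y * a) = y * a \<and> y ^ 2 * a = y"

definition ldpc_inverse :: "'a::ring_1_invol \<Rightarrow> 'a \<Rightarrow> bool" where
  "ldpc_inverse a y \<longleftrightarrow> (\<exists>k. ldpc_inverse_k k a y)"

definition ldpc_invertible :: "'a::ring_1_invol \<Rightarrow> bool" where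
  "ldpc_invertible a \<longleftrightarrow> (\<exists>y. ldpc_inverse a y)"

definition ldpc_index :: "'a::ring_1_invol \<Rightarrow> nat" where
  "ldpc_index a = (LEAST k. \<exists>y. ldpc_inverse_k k a y)"

definition ldc_inverse :: "'a::ring_1_invol \<Rightarrow> 'a \<Rightarrow> bool" where
  "ldc_inverse u z \<longleftrightarrow> u * z * u = u \<and> invol (z * u) = z * u \<and> z ^ 2 * u = z"

definition ldc_invertible :: "'a::ring_1_invol \<Rightarrow> bool" where
  "ldc_invertible u \<longleftrightarrow> (\<exists>z. ldc_inverse u z)"

end

theory Submission
  imports Defs
begin


lemma invol_zero: "invol (0::'a::ring_1_invol) = 0"
proof -
  have "invol 0 = invol 0 + invol 0" using invol_add[of 0 0] by simp
  then show ?thesis by simp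
qed

lemma pw1: fixes y :: "'a::ring_1_invol" assumes "y^2 * a = y" shows "y ^ Suc j * a ^ j = y"
proof (induction j)
  case 0 then show ?case by simp
next
  case (Suc j)
  have "y ^ Suc (Suc j) * a ^ Suc j = y * (y ^ Suc j * a ^ j) * a"
    by (simp add: power_Suc2 mult.assoc power_commutes)
  also have "\<dots> = y" using Suc assms by (simp add: power2_eq_square mult.assoc)
  finally show ?case .
qed

lemma pw2: fixes y :: "'a::ring_1_invol" assumes "y^2 * a = y" and "0 < j" shows "y ^ j * a ^ j = y * a"
proof -
  obtain i where j: "j = Suc i" using assms(2) by (cases j) auto
  have "y ^ j * a ^ j = (y ^ Suc i * a ^ i) * a" by (simp add: j power_Suc2 mult.assoc power_commutes)
  then show ?thesis using pw1[OF assms(1)] by simp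
qed

lemma key:
  fixes y :: "'a::ring_1_invol"
  assumes "ldpc_inverse_k k a y'" and "ldpc_inverse_k m a y"
  shows "y * a = y' * a"
proof -
  have k: "0 < k" "a ^ k * y' * a = a ^ k" "invol (y' * a) = y' * a" "y' ^ 2 * a = y'"
    using assms(1) unfolding ldpc_inverse_k_def by auto
  have m: "0 < m" "a ^ m * y * a = a ^ m" "invol (y * a) = y * a" "y ^ 2 * a = y"
    using assms(2) unfolding ldpc_inverse_k_def by auto
  have q: "y' * a = (y' * a) * (y * a)"
  proof -
    have "y' * a = y' ^ m * a ^ m" using pw2[OF k(4) m(1)] by simp
    also have "\<dots> = y' ^ m * (a ^ m * y * a)" using m(2) by simp
    also have "\<dots> = (y' ^ m * a ^ m) * (y * a)" by (simp add: mult.assoc)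
    also have "\<dots> = (y' * a) * (y * a)" using pw2[OF k(4) m(1)] by simp
    finally show ?thesis .
  qed
  have p: "y * a = (y * a) * (y' * a)"
  proof -
    have "y * a = y ^ k * a ^ k" using pw2[OF m(4) k(1)] by simp
    also have "\<dots> = y ^ k * (a ^ k * y' * a)" using k(2) by simp
    also have "\<dots> = (y ^ k * a ^ k) * (y' * a)" by (simp add: mult.assoc)
    also have "\<dots> = (y * a) * (y' * a)" using pw2[OF m(4) k(1)] by simp
    finally show ?thesis .
  qed
  have "y' * a = invol (y' * a)" using k(3) by simp
  also have "\<dots> = invol ((y' * a) * (y * a))" using q by simp
  also have "\<dots> = (y * a) * (y' * a)" using k(3) m(3) by (simp add: invol_mult)
  also have "\<dots> = y * a" using p by simp
  finally show ?thesis by simp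
qed

lemma idem: fixes y :: "'a::ring_1_invol" assumes "y^2 * a = y" and "a ^ k * y * a = a ^ k"
  shows "(y * a) * (y * a) = y * a"
proof -
  have "(y * a) * (y * a) = (y ^ Suc k * a ^ k) * a * y * a"
    using pw1[OF assms(1), of k] by (simp add: mult.assoc)
  also have "\<dots> = y ^ Suc k * (a * (a ^ k * y * a))" by (simp add: mult.assoc power_commutes)
  also have "\<dots> = y ^ Suc k * a ^ Suc k" using assms(2) by simp
  also have "\<dots> = y * a" using pw2[OF assms(1), of "Suc k"] by simp
  finally show ?thesis .
qed

theorem corollary3p16:
  fixes a :: "'a::ring_1_invol"
  assumes "ldpc_invertible a" and "ldpc_index a = k"
  shows "(\<exists>a1 a2. a ^ k = a1 + a2 \<and> ldc_invertible a1 \<and> a2 ^ 2 = 0 \<and>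
            invol a2 * a1 = 0 \<and> a1 * a2 = 0)
       \<and> (\<forall>y. ldpc_inverse a y \<longrightarrow>
              ldc_invertible (y * a ^ (k + 1)) \<and> ldc_inverse (y * a ^ (k + 1)) (y ^ k))"
proof -
  obtain y0 m0 where "ldpc_inverse_k m0 a y0"
    using assms(1) unfolding ldpc_invertible_def ldpc_inverse_def by auto
  then have "\<exists>y. ldpc_inverse_k k a y"
    using LeastI[of "\<lambda>k. \<exists>y. ldpc_inverse_k k a y" m0] assms(2)
    unfolding ldpc_index_def by auto
  then obtain y' where y': "ldpc_inverse_k k a y'" by auto
  have k: "0 < k" "a ^ k * y' * a = a ^ k" "invol (y' * a) = y' * a" "y' ^ 2 * a = y'"
    using y' unfolding ldpc_inverse_k_def by auto
  have second: "ldc_inverse (y * a ^ (k + 1)) (y ^ k)" if yl: "ldpc_inverse a y" for y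
  proof -
    obtain m where ym: "ldpc_inverse_k m a y" using yl unfolding ldpc_inverse_def by auto
    have m: "0 < m" "invol (y * a) = y * a" "y ^ 2 * a = y"
      using ym unfolding ldpc_inverse_k_def by auto
    have ya: "y * a = y' * a" using key[OF y' ym] .
    have ak: "a ^ k * y * a = a ^ k" using k(2) ya by (simp add: mult.assoc)
    have zu: "y ^ k * (y * a ^ (k + 1)) = y * a"
      using pw2[OF m(3), of "Suc k"] by (simp add: mult.assoc[symmetric] power_commutes)
    have 1: "y * a ^ (k + 1) * y ^ k * (y * a ^ (k + 1)) = y * a ^ (k + 1)"
    proof -
      have "y * a ^ (k + 1) * y ^ k * (y * a ^ (k + 1)) = y * (a * (a ^ k * y * a))"
        using zu by (simp add: mult.assoc)
      then show ?thesis using ak by simp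
    qed
    have 2: "(y ^ k) ^ 2 * (y * a ^ (k + 1)) = y ^ k"
    proof -
      obtain i where i: "k = Suc i" using k(1) by (cases k) auto
      have "(y ^ k) ^ 2 * (y * a ^ (k + 1)) = y ^ k * (y ^ k * (y * a ^ (k + 1)))"
        by (simp add: power2_eq_square mult.assoc)
      also have "\<dots> = y ^ k * (y * a)" using zu by simp
      also have "\<dots> = y ^ i * (y ^ 2 * a)" by (simp add: i power2_eq_square mult.assoc[symmetric] power_commutes)
      also have "\<dots> = y ^ k" using m(3) i by (simp add: power_Suc2 power_commutes)
      finally show ?thesis .
    qed
    show ?thesis unfolding ldc_inverse_def using 1 2 zu m(2) by (simp add: mult.assoc)
  qed
  have yinv: "ldpc_inverse a y'" unfolding ldpc_inverse_def using y' by auto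
  define p where "p = y' * a"
  have pp: "p * p = p" unfolding p_def using idem[OF k(4) k(2)] .
  have pi: "invol p = p" unfolding p_def using k(3) .
  have akp: "a ^ k * p = a ^ k" unfolding p_def using k(2) by (simp add: mult.assoc)
  define a1 where "a1 = p * a ^ k"
  define a2 where "a2 = a ^ k - p * a ^ k"
  have a1e: "a1 = y' * a ^ (k + 1)" unfolding a1_def p_def by (simp add: mult.assoc)
  have "a ^ k = a1 + a2" unfolding a1_def a2_def by simp
  moreover have "ldc_invertible a1" unfolding ldc_invertible_def a1e using second[OF yinv] by auto
  moreover have "a2 ^ 2 = 0"
  proof -
    have "a ^ k * a2 = 0" unfolding a2_def
      by (simp add: right_diff_distrib akp mult.assoc[symmetric])
    then have "a2 * a2 = 0" unfolding a2_def
      by (simp add: left_diff_distrib mult.assoc)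
    then show ?thesis by (simp add: power2_eq_square)
  qed
  moreover have "a1 * a2 = 0"
  proof -
    have "a ^ k * a2 = 0" unfolding a2_def
      by (simp add: right_diff_distrib akp mult.assoc[symmetric])
    then show ?thesis unfolding a1_def by (simp add: mult.assoc)
  qed
  moreover have "invol a2 * a1 = 0"
  proof -
    have "invol a1 * a2 = invol (a ^ k) * (p * a2)"
      unfolding a1_def by (simp add: invol_mult pi mult.assoc)
    also have "p * a2 = 0" unfolding a2_def
      by (simp add: right_diff_distrib pp mult.assoc[symmetric])
    finally have "invol (invol a1 * a2) = 0" by (simp add: invol_zero)
    then show ?thesis by (simp add: invol_mult invol_invol)
  qed
  ultimately show ?thesis using second unfolding ldc_invertible_def by blast
qed

end
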